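(* Let $s=(x,y,u,v)\in\mathbb{R}^4$ with $x,y,u,v\ge0$, $x+y=2$ and $u+v=2$, and write $W^k(s)=(x^{(k)},y^{(k)},u^{(k)},v^{(k)})$. If $y^{(k)}v^{(k)}=0$ for every $k\ge0$, then $y^{(k)}=v^{(k)}=0$ for every $k\ge0$.
   Context: $W:\mathbb{R}^4\to\mathbb{R}^4$ is the map $W(x,y,u,v)=(x',y',u',v')$ with $x'=\tfrac12 xu+\tfrac14 yu$, $y'=\tfrac12 xv+\tfrac14 yu+\tfrac13 yv$, $u'=\tfrac12 xu+\tfrac12 xv+\tfrac14 yu+\tfrac13 yv$, $v'=\tfrac14 yu+\tfrac13 yv$. $W^k$ denotes the $k$-fold iterate ($W^0$ the identity). *)

theory Defs
  imports Complex_Main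
begin

definition W :: "real \<times> real \<times> real \<times> real \<Rightarrow> real \<times> real \<times> real \<times> real" where
  "W s = (case s of (x, y, u, v) \<Rightarrow>
     (x*u/2 + y*u/4,
      x*v/2 + y*u/4 + y*v/3,
      x*u/2 + x*v/2 + y*u/4 + y*v/3,
      y*u/4 + y*v/3))"

end

theory Submission
  imports Defs
begin

lemma fixW: "(W ^^ k) (2, 0, 2, 0) = (2, 0, 2, 0)"
  by (induction k) (auto simp: W_def)

theorem lemma3p4:
  fixes x y u v :: real
  assumes "x \<ge> 0" "y \<ge> 0" "u \<ge> 0" "v \<ge> 0"
    and "x + y = 2" "u + v = 2"
    and "\<forall>k::nat. (case (W ^^ k) (x, y, u, v) of (x', y', u', v') \<Rightarrow> y' * v' = 0)"
  shows "\<forall>k::nat. (case (W ^^ k) (x, y, u, v) of (x', y', u', v') \<Rightarrow> y' = 0 \<and> v' = 0)"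
proof -
  have h0: "y * v = 0" using assms(7) spec[OF assms(7), of 0] by simp
  have h1: "(x*v/2 + y*u/4 + y*v/3) * (y*u/4 + y*v/3) = 0"
    using spec[OF assms(7), of "Suc 0"] by (simp add: W_def)
  have h2: "((x*u/2 + y*u/4)*(y*u/4 + y*v/3)/2
      + (x*v/2 + y*u/4 + y*v/3)*(x*u/2 + x*v/2 + y*u/4 + y*v/3)/4
      + (x*v/2 + y*u/4 + y*v/3)*(y*u/4 + y*v/3)/3) *
     ((x*v/2 + y*u/4 + y*v/3)*(x*u/2 + x*v/2 + y*u/4 + y*v/3)/4
      + (x*v/2 + y*u/4 + y*v/3)*(y*u/4 + y*v/3)/3) = 0"
    using spec[OF assms(7), of "Suc (Suc 0)"] by (simp add: W_def)
  have "y = 0 \<and> v = 0"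
  proof (rule ccontr)
    assume n: "\<not> (y = 0 \<and> v = 0)"
    show False
    proof (cases "y = 0")
      case True
      then have "v > 0" "x = 2" using n assms by auto
      then have e: "16*(v*v)*((u+v)*(u+v)) = 0" using h2 True \<open>x = 2\<close>
        by (simp add: field_simps)
      have "16*(v*v)*((u+v)*(u+v)) > 0" using \<open>v > 0\<close> assms(6) by simp
      then show False using e by simp
    next
      case False
      then have "y > 0" "v = 0" "u = 2" using h0 assms by auto
      then show False using h1 assms by simp
    qed
  qed
  then have "x = 2" "u = 2" "y = 0" "v = 0" using assms by auto
  then show ?thesis using fixW by simp
qed

end
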